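(* The automorphism $\mathcal R^{\mathcal W}$ acts on central elements of $\operatorname{Div}(\mathcal W_\xi^{\otimes2})$ by \[ \mathcal R^{\mathcal W}(z_i)=z_i,\quad \mathcal R^{\mathcal W}(x_1^N)=x_1^NG,\quad \mathcal R^{\mathcal W}(x_2^N)=x_2^NG^{-1}, \] \[ \mathcal R^{\mathcal W}(y_1^{-N})=y_2^{-N}+\Big(y_1^{-N}-\frac{y_2^{-N}}{z_2^N}\Big)x_2^{-N},\qquad \mathcal R^{\mathcal W}(y_2^{N})=\frac{z_1^N}{z_2^N}y_1^N+\Big(y_2^N-\frac{y_1^N}{z_2^N}\Big)x_1^N, \] with $G=1+x_1^{-N}\frac{y_1^N}{y_2^N}(x_1^N-z_1^N)(x_2^N-z_2^{-N})$, and the inverse acts by \[ (\mathcal R^{\mathcal W})^{-1}(x_1^N)=x_1^N\tilde G^{-1},\quad (\mathcal R^{\mathcal W})^{-1}(x_2^N)=x_2^N\tilde G, \] \[ (\mathcal R^{\mathcal W})^{-1}(y_1^{-N})=\frac{z_1^N}{z_2^N}y_2^{-N}+(y_1^{-N}-z_1^Ny_2^{-N})x_2^N,\qquad (\mathcal R^{\mathcal W})^{-1}(y_2^N)=y_1^N+(y_2^N-z_1^Ny_1^N)x_1^{-N}, \] with $\tilde G=1+x_2^{-N}\frac{y_1^N}{y_2^N}(x_1^N-z_1^N)(x_2^N-z_2^{-N})$.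
   Context: $N\ge2$, $\xi=e^{\pi i/N}$. $\mathcal W_\xi$ is the $\mathbb C$-algebra generated by invertible $x,y$ and central invertible $z$ with $xy=\xi^2yx$; in $\mathcal W_\xi^{\otimes 2}$ write $x_1=x\otimes 1$, $y_2=1\otimes y$, etc. $\mathcal R^{\mathcal W}$ is the algebra automorphism of the division algebra $\operatorname{Div}(\mathcal W_\xi^{\otimes2})$ given on generators (with $q=\xi$) by $\mathcal R^{\mathcal W}(z_i)=z_i$, $\mathcal R^{\mathcal W}(x_1)=x_1g$, $\mathcal R^{\mathcal W}(x_2)=g^{-1}x_2$, $\mathcal R^{\mathcal W}(y_1^{-1})=y_2^{-1}+(y_1^{-1}-z_2^{-1}y_2^{-1})x_2^{-1}$, $\mathcal R^{\mathcal W}(y_2)=\frac{z_1}{z_2}y_1+(y_2-z_2^{-1}y_1)x_1$, where $g=1-x_1^{-1}y_1(z_1-x_1)y_2^{-1}(x_2-z_2^{-1})$. *)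

theory Defs
  imports Complex_Main
begin

definition xi :: "nat \<Rightarrow> complex" where
  "xi N = cis (pi / real N)"

text \<open>Exponent vectors for normally ordered monomials
  x1^a1 y1^b1 z1^c1 x2^a2 y2^b2 z2^c2 of the quantum torus W_xi tensor W_xi.\<close>
type_synonym exps = "int \<times> int \<times> int \<times> int \<times> int \<times> int"

definition mono ::
  "'a::division_ring \<Rightarrow> 'a \<Rightarrow> 'a \<Rightarrow> 'a \<Rightarrow> 'a \<Rightarrow> 'a \<Rightarrow> exps \<Rightarrow> 'a" where
  "mono x1 y1 z1 x2 y2 z2 m =
     (case m of (a1, b1, c1, a2, b2, c2) \<Rightarrow>
        x1 powi a1 * y1 powi b1 * z1 powi c1 * x2 powi a2 * y2 powi b2 * z2 powi c2)"

text \<open>Evaluation of a finitely supported complex coefficient function on exponent vectors,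
  i.e. the image of an element of W_xi tensor W_xi, complex scalars acting through c.\<close>
definition qeval ::
  "(complex \<Rightarrow> 'a::division_ring) \<Rightarrow> 'a \<Rightarrow> 'a \<Rightarrow> 'a \<Rightarrow> 'a \<Rightarrow> 'a \<Rightarrow> 'a \<Rightarrow> (exps \<Rightarrow> complex) \<Rightarrow> 'a" where
  "qeval c x1 y1 z1 x2 y2 z2 f =
     (\<Sum>m\<in>{m. f m \<noteq> 0}. c (f m) * mono x1 y1 z1 x2 y2 z2 m)"

text \<open>D (the carrier type, with complex scalars via the central embedding c) is the
  division algebra Div(W_xi tensor W_xi), presented via the generators x1,y1,z1,x2,y2,z2:
  c is a central embedding of the complex numbers; the generators satisfy exactly the
  defining relations of W_xi tensor W_xi (normally ordered monomials are linearly independent,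
  so the induced map from W_xi tensor W_xi is injective); and every element of D is a fraction
  a * s^-1 of elements of (the image of) W_xi tensor W_xi (classical ring of fractions).\<close>
definition is_Div_W2 ::
  "nat \<Rightarrow> (complex \<Rightarrow> 'a::division_ring) \<Rightarrow> 'a \<Rightarrow> 'a \<Rightarrow> 'a \<Rightarrow> 'a \<Rightarrow> 'a \<Rightarrow> 'a \<Rightarrow> bool" where
  "is_Div_W2 N c x1 y1 z1 x2 y2 z2 \<longleftrightarrow>
     c 1 = 1 \<and> (\<forall>a b. c (a + b) = c a + c b) \<and> (\<forall>a b. c (a * b) = c a * c b) \<and>
     (\<forall>a d. c a * d = d * c a) \<and>
     x1 \<noteq> 0 \<and> y1 \<noteq> 0 \<and> z1 \<noteq> 0 \<and> x2 \<noteq> 0 \<and> y2 \<noteq> 0 \<and> z2 \<noteq> 0 \<and>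
     x1 * y1 = c ((xi N)\<^sup>2) * y1 * x1 \<and> x2 * y2 = c ((xi N)\<^sup>2) * y2 * x2 \<and>
     (\<forall>u\<in>{x1, y1, z1, x2, y2, z2}. z1 * u = u * z1 \<and> z2 * u = u * z2) \<and>
     (\<forall>u\<in>{x1, y1}. \<forall>v\<in>{x2, y2}. u * v = v * u) \<and>
     (\<forall>f. finite {m. f m \<noteq> 0} \<longrightarrow> qeval c x1 y1 z1 x2 y2 z2 f = 0 \<longrightarrow> (\<forall>m. f m = 0)) \<and>
     (\<forall>d. \<exists>f s. finite {m. f m \<noteq> 0} \<and> finite {m. s m \<noteq> 0} \<and>
             qeval c x1 y1 z1 x2 y2 z2 s \<noteq> 0 \<and>
             d = qeval c x1 y1 z1 x2 y2 z2 f * inverse (qeval c x1 y1 z1 x2 y2 z2 s))"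

definition is_alg_aut :: "(complex \<Rightarrow> 'a::division_ring) \<Rightarrow> ('a \<Rightarrow> 'a) \<Rightarrow> bool" where
  "is_alg_aut c R \<longleftrightarrow> bij R \<and> R 1 = 1 \<and> (\<forall>a b. R (a + b) = R a + R b) \<and>
     (\<forall>a b. R (a * b) = R a * R b) \<and> (\<forall>s. R (c s) = c s)"

end

theory Submission
  imports Defs
begin


fun qb :: "complex \<Rightarrow> nat \<Rightarrow> nat \<Rightarrow> complex" where
  "qb q n 0 = 1"
| "qb q 0 (Suc k) = 0"
| "qb q (Suc n) (Suc k) = qb q n (Suc k) + q^(n-k) * qb q n k"

lemma qb_zero: "n < k \<Longrightarrow> qb q n k = 0"
proof (induction n arbitrary: k)
  case 0 then show ?case by (cases k) auto
next
  case (Suc n) then show ?case by (cases k) auto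
qed

lemma qb_diag: "qb q n n = 1"
  by (induction n) (auto simp: qb_zero)

lemma qb_ratio: "(1 - q^(Suc k)) * qb q n (Suc k) = (1 - q^(n-k)) * qb q n k"
proof (induction n arbitrary: k)
  case 0 then show ?case by (cases k) auto
next
  case (Suc n)
  show ?case
  proof (cases k)
    case 0
    have "(1 - q) * qb q n 1 = 1 - q^n" using Suc.IH[of 0] by simp
    have "(1 - q) * qb q (Suc n) 1 = (1 - q) * qb q n 1 + (1 - q) * q^n"
      by (simp add: algebra_simps)
    also have "\<dots> = (1 - q^n) + (1 - q) * q^n" using \<open>(1 - q) * qb q n 1 = 1 - q^n\<close> by simp
    also have "\<dots> = 1 - q^(Suc n)" by (simp add: algebra_simps)
    finally show ?thesis using 0 by simp
  next
    case (Suc j)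
    note k = this
    show ?thesis
    proof (cases "j < n")
      case True
      then obtain d where n: "n = j + 1 + d" by (metis add.commute less_imp_Suc_add add_Suc_right Suc_eq_plus1)
      have h1: "n - Suc j = d" "Suc n - Suc j = Suc d" "n - j = Suc d" using n by auto
      have I1: "(1 - q^(Suc (Suc j))) * qb q n (Suc (Suc j)) = (1 - q^d) * qb q n (Suc j)"
        using Suc.IH[of "Suc j"] h1 by simp
      have I2: "(1 - q^(Suc j)) * qb q n (Suc j) = (1 - q^(Suc d)) * qb q n j"
        using Suc.IH[of "j"] h1 by simp
      have L: "(1 - q^(Suc k)) * qb q (Suc n) (Suc k) = (1 - q^d) * qb q n (Suc j) + (1 - q^(Suc (Suc j))) * q^d * qb q n (Suc j)"
      proof -
        have "(1 - q^(Suc k)) * qb q (Suc n) (Suc k) = (1 - q^(Suc (Suc j))) * qb q n (Suc (Suc j)) + (1 - q^(Suc (Suc j))) * q^d * qb q n (Suc j)"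
          using k h1 by (simp add: algebra_simps del: power_Suc)
        then show ?thesis unfolding I1 .
      qed
      have R: "(1 - q^(Suc n - k)) * qb q (Suc n) k = (1 - q^(Suc d)) * qb q n (Suc j) + q^(Suc d) * ((1 - q^(Suc d)) * qb q n j)"
        using k h1 by (simp add: algebra_simps del: power_Suc)
      have e: "d + Suc (Suc j) = Suc n" "Suc d + Suc j = Suc n" using n by auto
      show ?thesis unfolding L R I2[symmetric] by (simp add: algebra_simps power_add[symmetric] e del: power_Suc)
    next
      case False
      then show ?thesis using k by (auto simp: qb_zero)
    qed
  qed
qed

lemma qb_vanish:
  assumes "q^N = 1" "\<And>k. 0 < k \<Longrightarrow> k < N \<Longrightarrow> q^k \<noteq> 1"
  shows "0 < k \<Longrightarrow> k < N \<Longrightarrow> qb q N k = 0"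
proof (induction k)
  case 0 then show ?case by simp
next
  case (Suc k)
  show ?case
  proof (cases k)
    case 0
    have "(1 - q) * qb q N 1 = 0" using qb_ratio[of q 0 N] assms(1) by simp
    moreover have "q \<noteq> 1" using assms(2)[of 1] Suc 0 by auto
    ultimately show ?thesis using 0 by simp
  next
    case (Suc j)
    with Suc.IH Suc.prems have "qb q N k = 0" by simp
    then have "(1 - q^(Suc k)) * qb q N (Suc k) = 0" using qb_ratio[of q k N] by simp
    moreover have "q^(Suc k) \<noteq> 1" using assms(2) Suc.prems by blast
    ultimately show ?thesis by simp
  qed
qed

definition chom :: "(complex \<Rightarrow> 'a::division_ring) \<Rightarrow> bool" where
  "chom c \<longleftrightarrow> c 1 = 1 \<and> (\<forall>a b. c (a + b) = c a + c b) \<and> (\<forall>a b. c (a * b) = c a * c b)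
     \<and> (\<forall>a d. c a * d = d * c a)"

lemma chom_simps:
  assumes "chom c"
  shows "c 1 = 1" "c (a + b) = c a + c b" "c (a * b) = c a * c b" "c 0 = 0"
    "c (- a) = - c a" "c (a - b) = c a - c b" "c (a ^ n) = c a ^ n"
proof -
  have c1: "c 1 = 1" and ca': "\<And>a b. c (a + b) = c a + c b" and cm': "\<And>a b. c (a * b) = c a * c b"
    using assms unfolding chom_def by blast+
  show "c 1 = 1" "c (a + b) = c a + c b" "c (a * b) = c a * c b" using c1 ca' cm' by blast+
  have "c 0 + c 0 = c 0 + 0" using ca'[of 0 0] by simp
  then show c0: "c 0 = 0" by (rule add_left_imp_eq)
  have "c a + c (- a) = c a + - c a" using ca'[of a "- a"] c0 by simp
  then show cn: "c (- a) = - c a" by (rule add_left_imp_eq)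
  have "c (- b) = - c b" using ca'[of b "- b"] c0 by (metis add_left_imp_eq add.right_inverse)
  then show "c (a - b) = c a - c b" using ca'[of a "- b"] by simp
  show "c (a ^ n) = c a ^ n" by (induction n) (simp_all add: c1 cm')
qed

lemma chom_comm: "chom c \<Longrightarrow> c a * d = d * c a"
  by (auto simp: chom_def)

lemma pow_qcomm:
  assumes c: "chom c" and AB: "A * B = c q * B * A"
  shows "A^m * B = c (q^m) * B * A^m"
proof (induction m)
  case 0 then show ?case using chom_simps(1)[OF c] by simp
next
  case (Suc m)
  have "A^(Suc m) * B = A^m * (A * B)" by (simp only: power_Suc2 mult.assoc)
  also have "\<dots> = A^m * (c q * B * A)" by (simp add: AB)
  also have "\<dots> = c q * (A^m * B) * A" using chom_comm[OF c, of q "A^m"] by (metis mult.assoc)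
  also have "\<dots> = c q * (c (q^m) * B * A^m) * A" by (simp add: Suc)
  also have "\<dots> = c (q^(Suc m)) * B * A^(Suc m)"
  proof -
    have e: "c (q^(Suc m)) = c q * c (q^m)" by (simp add: chom_simps(3)[OF c])
    show ?thesis unfolding e by (simp only: power_Suc2 mult.assoc)
  qed
  finally show ?case .
qed

lemma qexpand:
  assumes c: "chom c" and AB: "A * B = c q * B * A"
  shows "(A + B)^n = (\<Sum>k\<le>n. c (qb q n k) * (B^k * A^(n-k)))"
proof (induction n)
  case 0 then show ?case using chom_simps(1)[OF c] by simp
next
  case (Suc n)
  define S where "S = (\<Sum>k\<le>n. c (qb q n k) * (B^k * A^(n-k)))"
  have SA: "S * A = A^(Suc n) + (\<Sum>k\<le>n. c (qb q n (Suc k)) * (B^(Suc k) * A^(n-k)))"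
  proof -
    have "S * A = (\<Sum>k\<le>n. c (qb q n k) * (B^k * A^(Suc n-k)))"
      unfolding S_def sum_distrib_right
    proof (rule sum.cong)
      fix k assume "k \<in> {..n}"
      then have "Suc n - k = Suc (n - k)" by auto
      then show "c (qb q n k) * (B ^ k * A ^ (n - k)) * A = c (qb q n k) * (B^k * A^(Suc n-k))"
        by (simp only: power_Suc2 mult.assoc)
    qed simp
    also have "\<dots> = (\<Sum>k\<le>Suc n. c (qb q n k) * (B^k * A^(Suc n-k)))"
      by (simp add: qb_zero chom_simps(4)[OF c])
    also have "\<dots> = A^(Suc n) + (\<Sum>k\<le>n. c (qb q n (Suc k)) * (B^(Suc k) * A^(n-k)))"
      by (subst sum.atMost_Suc_shift) (simp add: chom_simps(1)[OF c] del: power_Suc)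
    finally show ?thesis .
  qed
  have SB: "S * B = (\<Sum>k\<le>n. c (q^(n-k) * qb q n k) * (B^(Suc k) * A^(n-k)))"
    unfolding S_def sum_distrib_right
  proof (rule sum.cong)
    fix k
    have "c (qb q n k) * (B ^ k * A ^ (n - k)) * B = c (qb q n k) * (B ^ k * (A ^ (n - k) * B))"
      by (simp only: mult.assoc)
    also have "\<dots> = c (qb q n k) * (B ^ k * (c (q^(n-k)) * B * A ^ (n - k)))"
      by (simp only: pow_qcomm[OF c AB])
    also have "\<dots> = c (qb q n k) * c (q^(n-k)) * (B ^ k * B * A ^ (n - k))"
      using chom_comm[OF c, of "q^(n-k)" "B^k"] by (metis mult.assoc)
    also have "\<dots> = c (q^(n-k) * qb q n k) * (B^(Suc k) * A^(n-k))"
      using chom_comm[OF c, of "qb q n k" "c (q^(n-k))"]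
      by (simp only: chom_simps(3)[OF c] power_Suc2 mult.assoc)
    finally show "c (qb q n k) * (B ^ k * A ^ (n - k)) * B = c (q^(n-k) * qb q n k) * (B^(Suc k) * A^(n-k))" .
  qed simp
  have "(A + B)^(Suc n) = S * A + S * B"
    by (simp only: Suc S_def[symmetric] power_Suc2 distrib_left)
  also have "\<dots> = (\<Sum>k\<le>Suc n. c (qb q (Suc n) k) * (B^k * A^(Suc n-k)))"
    unfolding SA SB
    by (subst sum.atMost_Suc_shift) (simp add: chom_simps(1,2)[OF c] distrib_right sum.distrib add.assoc del: power_Suc)
  finally show ?case .
qed

lemma qbinom_root:
  assumes c: "chom c" and AB: "A * B = c q * B * A"
    and q1: "q^N = 1" and qk: "\<And>k. 0 < k \<Longrightarrow> k < N \<Longrightarrow> q^k \<noteq> 1" and N: "1 \<le> N"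
  shows "(A + B)^N = A^N + B^N"
proof -
  obtain M where M: "N = Suc M" using N by (cases N) auto
  let ?f = "\<lambda>k. c (qb q N k) * (B^k * A^(N-k))"
  have "(A + B)^N = (\<Sum>k\<le>M. ?f k) + ?f N" using qexpand[OF c AB, of N] M by simp
  also have "(\<Sum>k\<le>M. ?f k) = (\<Sum>k\<in>{0}. ?f k)"
  proof (rule sum.mono_neutral_right)
    show "\<forall>i\<in>{..M} - {0}. ?f i = 0"
    proof
      fix i assume "i \<in> {..M} - {0}"
      then have "0 < i" "i < N" using M by auto
      then have "qb q N i = 0" using qb_vanish[OF q1 qk] by blast
      then show "?f i = 0" by (simp add: chom_simps(4)[OF c])
    qed
  qed auto
  finally show ?thesis by (simp add: qb_diag chom_simps(1)[OF c] add.commute)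
qed



typedef (overloaded) 'a ctr = "{a::'a::division_ring. \<forall>b. a * b = b * a}"
  morphisms rep abs by (rule exI[of _ 0]) simp

setup_lifting type_definition_ctr

lemma inv_comm: "(a::'a::division_ring) * b = b * a \<Longrightarrow> inverse a * b = b * inverse a"
proof (cases "a = 0")
  case False
  assume h: "a * b = b * a"
  have "inverse a * b = inverse a * (b * a) * inverse a" using False by (simp add: mult.assoc)
  also have "\<dots> = inverse a * (a * b) * inverse a" by (simp add: h)
  also have "\<dots> = b * inverse a" using False by (simp add: mult.assoc[symmetric])
  finally show ?thesis .
qed simp

instantiation ctr :: (division_ring) field
begin
lift_definition zero_ctr :: "'a ctr" is 0 by simp
lift_definition one_ctr :: "'a ctr" is 1 by simp
lift_definition plus_ctr :: "'a ctr \<Rightarrow> 'a ctr \<Rightarrow> 'a ctr" is "(+)" by (simp add: distrib_left distrib_right)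
lift_definition minus_ctr :: "'a ctr \<Rightarrow> 'a ctr \<Rightarrow> 'a ctr" is "(-)" by (simp add: left_diff_distrib right_diff_distrib)
lift_definition uminus_ctr :: "'a ctr \<Rightarrow> 'a ctr" is uminus by simp
lift_definition times_ctr :: "'a ctr \<Rightarrow> 'a ctr \<Rightarrow> 'a ctr" is "(*)" by (metis mult.assoc)
lift_definition inverse_ctr :: "'a ctr \<Rightarrow> 'a ctr" is inverse by (simp add: inv_comm)
lift_definition divide_ctr :: "'a ctr \<Rightarrow> 'a ctr \<Rightarrow> 'a ctr" is "\<lambda>a b. a * inverse b"
  by (metis inv_comm mult.assoc)
instance
proof
  fix a b c :: "'a ctr"
  show "a * b * c = a * (b * c)" by transfer (rule mult.assoc)
  show "a * b = b * a" by transfer blast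
  show "1 * a = a" by transfer (rule mult_1_left)
  show "a + b + c = a + (b + c)" by transfer (rule add.assoc)
  show "a + b = b + a" by transfer (rule add.commute)
  show "0 + a = a" by transfer (rule add_0_left)
  show "- a + a = 0" by transfer (rule left_minus)
  show "a - b = a + - b" by transfer (rule diff_conv_add_uminus)
  show "(a + b) * c = a * c + b * c" by transfer (rule distrib_right)
  show "(0::'a ctr) \<noteq> 1" by transfer (rule zero_neq_one)
  show "a \<noteq> 0 \<Longrightarrow> inverse a * a = 1" by transfer (rule left_inverse)
  show "a div b = a * inverse b" by transfer (rule refl)
  show "inverse (0::'a ctr) = 0" by transfer (rule inverse_zero)
qed
end

lemma rep_simps: "rep 0 = 0" "rep 1 = 1" "rep (a + b) = rep a + rep b" "rep (a - b) = rep a - rep b"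
  "rep (- a) = - rep a" "rep (a * b) = rep a * rep b" "rep (inverse a) = inverse (rep a)"
  "rep (a / b) = rep a * inverse (rep b)"
  by (simp_all add: zero_ctr.rep_eq one_ctr.rep_eq plus_ctr.rep_eq minus_ctr.rep_eq uminus_ctr.rep_eq
      times_ctr.rep_eq inverse_ctr.rep_eq divide_ctr.rep_eq)

lemma rep_pow: "rep (a ^ n) = rep a ^ n"
  by (induction n) (simp_all add: rep_simps)



lemma comm_invs:
  fixes a b :: "'a::division_ring"
  assumes "a * b = b * a"
  shows "inverse a * b = b * inverse a" "a * inverse b = inverse b * a"
    "inverse a * inverse b = inverse b * inverse a"
proof -
  show 1: "inverse a * b = b * inverse a" using inv_comm[OF assms] .
  show 2: "a * inverse b = inverse b * a" using inv_comm[OF assms[symmetric]] by simp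
  show "inverse a * inverse b = inverse b * inverse a" using inv_comm[OF 1[symmetric]] by simp
qed

lemma lcomm: "(u::'a::semigroup_mult) * v = v * u \<Longrightarrow> u * (v * t) = v * (u * t)"
  by (metis mult.assoc)

lemma pow_prod_comm:
  fixes a b :: "'a::monoid_mult"
  assumes "a * b = b * a"
  shows "(a * b)^n = a^n * b^n"
proof (induction n)
  case (Suc n)
  have bn: "b * a^n = a^n * b" using power_commuting_commutes[OF assms, of n] by simp
  have "(a * b)^(Suc n) = a * b * (a^n * b^n)" by (simp add: Suc)
  also have "\<dots> = a * (b * a^n) * b^n" by (simp add: mult.assoc)
  also have "\<dots> = a^(Suc n) * b^(Suc n)" by (simp add: bn mult.assoc power_Suc2[symmetric])
  finally show ?case .
qed simp

lemma swap_pow: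
  assumes c: "chom c" and r: "x * y = c (s^2) * y * x"
  shows "(y * x)^n = c (s^(n*(n-1))) * (y^n * x^n)"
proof (induction n)
  case 0 then show ?case using chom_simps(1)[OF c] by simp
next
  case (Suc n)
  have "(y * x)^(Suc n) = (y * x)^n * (y * x)" by (simp only: power_Suc2)
  also have "\<dots> = c (s^(n*(n-1))) * (y^n * (x^n * y) * x)" by (simp only: Suc mult.assoc)
  also have "\<dots> = c (s^(n*(n-1))) * (y^n * (c ((s^2)^n) * y * x^n) * x)"
    by (simp only: pow_qcomm[OF c r])
  also have "\<dots> = c (s^(n*(n-1))) * c ((s^2)^n) * (y^n * y * (x^n * x))"
    by (simp only: mult.assoc lcomm[OF chom_comm[OF c, of "(s^2)^n" "y^n", symmetric]])
  also have "\<dots> = c (s^(n*(n-1)) * (s^2)^n) * (y^(Suc n) * x^(Suc n))"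
    by (simp only: chom_simps(3)[OF c] power_Suc2)
  also have "s^(n*(n-1)) * (s^2)^n = s^(Suc n * (Suc n - 1))"
  proof -
    have "n*(n-1) + 2*n = Suc n * n" by (cases n) auto
    have "s^(n*(n-1)) * (s^2)^n = s^(n*(n-1)) * s^(2*n)" by (simp only: power_mult)
    also have "\<dots> = s^(n*(n-1) + 2*n)" by (simp only: power_add)
    also have "n*(n-1) + 2*n = Suc n * (Suc n - 1)" using \<open>n*(n-1) + 2*n = Suc n * n\<close> by simp
    finally show ?thesis .
  qed
  finally show ?case .
qed

lemma xi_facts:
  assumes N: "N \<ge> 1"
  shows "xi N ^ N = -1" "(xi N ^ 2)^N = 1" "\<And>k. 0 < k \<Longrightarrow> k < N \<Longrightarrow> (xi N ^ 2)^k \<noteq> 1"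
    "xi N \<noteq> 0"
proof -
  show x1: "xi N ^ N = -1" using N by (simp add: xi_def DeMoivre)
  show "(xi N ^ 2)^N = 1" by (simp add: power_mult[symmetric] mult.commute[of 2] power_mult x1)
  show "xi N \<noteq> 0" by (simp add: xi_def)
  fix k :: nat assume k: "0 < k" "k < N"
  have e: "(xi N ^ 2)^k = cis (2 * pi * real k / real N)"
    by (simp add: xi_def DeMoivre power_mult[symmetric] field_simps)
  show "(xi N ^ 2)^k \<noteq> 1"
  proof
    assume "(xi N ^ 2)^k = 1"
    then have "cis (2 * pi * real k / real N) = 1" using e by simp
    then have "Re (cis (2 * pi * real k / real N)) = 1" by simp
    then have "cos (2 * pi * real k / real N) = 1" by simp
    then obtain m :: int where m: "2 * pi * real k / real N = real_of_int m * 2 * pi" using cos_one_2pi_int by blast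
    then have "real k = real_of_int m * real N" using N by (simp add: field_simps)
    then have "int k = m * int N" by (metis of_int_eq_iff of_int_mult of_int_of_nat_eq)
    moreover have "0 < int k" "int k < int N" using k by auto
    ultimately show False
    proof (cases "m \<le> 0")
      case True
      then have "m * int N \<le> 0" by (simp add: mult_nonpos_nonneg)
      then show False using \<open>int k = m * int N\<close> \<open>0 < int k\<close> by linarith
    next
      case False
      then have "1 * int N \<le> m * int N" by (intro mult_right_mono) auto
      then show False using \<open>int k = m * int N\<close> \<open>int k < int N\<close> by linarith
    qed
  qed
qed

lemma comm_mult: "(u::'a::semigroup_mult) * a = a * u \<Longrightarrow> u * b = b * u \<Longrightarrow> u * (a * b) = (a * b) * u"
  by (metis mult.assoc)

lemma comm_powi:
  fixes u a :: "'a::division_ring"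
  assumes "u * a = a * u"
  shows "u * (a powi n) = (a powi n) * u"
proof -
  have 1: "u * a^m = a^m * u" for m using power_commuting_commutes[OF assms[symmetric], of m] by simp
  have 2: "u * inverse a = inverse a * u" using comm_invs(2)[OF assms] .
  have 3: "u * (inverse a)^m = (inverse a)^m * u" for m using power_commuting_commutes[OF 2[symmetric], of m] by simp
  show ?thesis unfolding power_int_def using 1 3 by simp
qed

lemma central:
  fixes u :: "'a::division_ring"
  assumes D: "is_Div_W2 N c x1 y1 z1 x2 y2 z2"
    and h: "u * x1 = x1 * u" "u * y1 = y1 * u" "u * z1 = z1 * u" "u * x2 = x2 * u"
      "u * y2 = y2 * u" "u * z2 = z2 * u"
  shows "u * d = d * u"
proof -
  have cc: "\<And>a. u * c a = c a * u" using D unfolding is_Div_W2_def by metis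
  have mo: "u * mono x1 y1 z1 x2 y2 z2 m = mono x1 y1 z1 x2 y2 z2 m * u" for m
    unfolding mono_def using h
    by (auto split: prod.splits intro!: comm_mult comm_powi)
  have qe: "u * qeval c x1 y1 z1 x2 y2 z2 f = qeval c x1 y1 z1 x2 y2 z2 f * u" for f
    unfolding qeval_def sum_distrib_left sum_distrib_right
    by (rule sum.cong) (auto intro!: comm_mult cc mo)
  obtain f s where "d = qeval c x1 y1 z1 x2 y2 z2 f * inverse (qeval c x1 y1 z1 x2 y2 z2 s)"
    using D unfolding is_Div_W2_def by metis
  then show ?thesis using qe comm_invs(2)[OF qe] by (metis comm_mult)
qed



lemma field_ids:
  fixes X1 Y1 Z1 X2 Y2 Z2 G A3 A4 :: "'b::field"
  assumes nz: "X1 \<noteq> 0" "Y1 \<noteq> 0" "Z1 \<noteq> 0" "X2 \<noteq> 0" "Y2 \<noteq> 0" "Z2 \<noteq> 0"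
    and G: "G = 1 + inverse X1 * Y1 * inverse Y2 * (X1 - Z1) * (X2 - inverse Z2)" and Gnz: "G \<noteq> 0"
    and A3: "A3 = inverse Y2 + (inverse Y1 - inverse Y2 * inverse Z2) * inverse X2" and A3nz: "A3 \<noteq> 0"
    and A4: "A4 = Z1 * inverse Z2 * Y1 + (Y2 - Y1 * inverse Z2) * X1" and A4nz: "A4 \<noteq> 0"
  shows "1 + inverse (X2 * inverse G) * inverse A3 * inverse A4 * (X1 * G - Z1) * (X2 * inverse G - inverse Z2) = G"
    and "Z1 * inverse Z2 * inverse A4 + (A3 - Z1 * inverse A4) * (X2 * inverse G) = inverse Y1"
    and "inverse A3 + (A4 - Z1 * inverse A3) * inverse (X1 * G) = Y2"
proof -
  define n3 where "n3 = Y1*Z2*X2 + Y2*Z2 - Y1"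
  define n4 where "n4 = Z1*Y1 + (Y2*Z2 - Y1)*X1"
  define u where "u = Y1*(X1 - Z1)*(X2*Z2 - 1)"
  define nG where "nG = X1*Y2*Z2 + u"
  have eA3: "A3 = n3 / (Y1*Y2*Z2*X2)" unfolding A3 n3_def using nz by (simp add: field_simps)
  have eA4: "A4 = n4 / Z2" unfolding A4 n4_def using nz by (simp add: field_simps)
  have eG: "G = nG / (X1*Y2*Z2)" unfolding G nG_def u_def using nz by (simp add: field_simps)
  have n3nz: "n3 \<noteq> 0" using A3nz eA3 by auto
  have n4nz: "n4 \<noteq> 0" using A4nz eA4 by auto
  have nGnz: "nG \<noteq> 0" using Gnz eG by auto
  have e1: "X1 * G - Z1 = (X1 - Z1) * n3 / (Y2 * Z2)"
    unfolding eG nG_def u_def n3_def using nz by (simp add: field_simps) (algebra)?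
  have e2: "X2 * inverse G - inverse Z2 = (X2*Z2 - 1) * n4 / (nG * Z2)"
    unfolding eG using nz nGnz by (simp add: field_simps) (simp add: nG_def u_def n4_def, algebra)
  show "1 + inverse (X2 * inverse G) * inverse A3 * inverse A4 * (X1 * G - Z1) * (X2 * inverse G - inverse Z2) = G"
    unfolding e1 e2 unfolding eA3 eA4 eG using nz n3nz n4nz nGnz
    by (simp add: field_simps) (simp add: nG_def u_def, algebra)
  show "Z1 * inverse Z2 * inverse A4 + (A3 - Z1 * inverse A4) * (X2 * inverse G) = inverse Y1"
    unfolding eA3 eA4 eG using nz n3nz n4nz nGnz
    by (simp add: field_simps) (simp add: nG_def u_def n3_def n4_def, algebra)
  show "inverse A3 + (A4 - Z1 * inverse A3) * inverse (X1 * G) = Y2"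
    unfolding eA3 eA4 eG using nz n3nz n4nz nGnz
    by (simp add: field_simps) (simp add: nG_def u_def n3_def n4_def, algebra)
qed


lemma lcomm': "(u::'a::semigroup_mult) * v = w * (v' * u') \<Longrightarrow> u * (v * t) = w * (v' * (u' * t))"
  by (metis mult.assoc)

theorem proposition3p3:
  fixes N :: nat and c :: "complex \<Rightarrow> 'a::division_ring"
    and x1 y1 z1 x2 y2 z2 :: 'a and R :: "'a \<Rightarrow> 'a"
  assumes "N \<ge> 2"
    and D: "is_Div_W2 N c x1 y1 z1 x2 y2 z2"
    and aut: "is_alg_aut c R"
    and g_def: "g = 1 - inverse x1 * y1 * (z1 - x1) * inverse y2 * (x2 - inverse z2)"
    and Rz1: "R z1 = z1" and Rz2: "R z2 = z2"
    and Rx1: "R x1 = x1 * g"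
    and Rx2: "R x2 = inverse g * x2"
    and Ry1: "R (inverse y1) = inverse y2 + (inverse y1 - inverse z2 * inverse y2) * inverse x2"
    and Ry2: "R y2 = z1 * inverse z2 * y1 + (y2 - inverse z2 * y1) * x1"
    and G_def: "G = 1 + inverse (x1 ^ N) * y1 ^ N * inverse (y2 ^ N)
                      * (x1 ^ N - z1 ^ N) * (x2 ^ N - inverse (z2 ^ N))"
    and Gt_def: "Gt = 1 + inverse (x2 ^ N) * y1 ^ N * inverse (y2 ^ N)
                      * (x1 ^ N - z1 ^ N) * (x2 ^ N - inverse (z2 ^ N))"
  shows "R z1 = z1 \<and> R z2 = z2
    \<and> R (x1 ^ N) = x1 ^ N * G
    \<and> R (x2 ^ N) = x2 ^ N * inverse G
    \<and> R (inverse y1 ^ N) = inverse y2 ^ N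
          + (inverse y1 ^ N - inverse y2 ^ N * inverse (z2 ^ N)) * inverse x2 ^ N
    \<and> R (y2 ^ N) = z1 ^ N * inverse (z2 ^ N) * y1 ^ N
          + (y2 ^ N - y1 ^ N * inverse (z2 ^ N)) * x1 ^ N
    \<and> inv R (x1 ^ N) = x1 ^ N * inverse Gt
    \<and> inv R (x2 ^ N) = x2 ^ N * Gt
    \<and> inv R (inverse y1 ^ N) = z1 ^ N * inverse (z2 ^ N) * inverse y2 ^ N
          + (inverse y1 ^ N - z1 ^ N * inverse y2 ^ N) * x2 ^ N
    \<and> inv R (y2 ^ N) = y1 ^ N + (y2 ^ N - z1 ^ N * y1 ^ N) * inverse x1 ^ N"
proof -
  have N1: "N \<ge> 1" using assms(1) by simp
  define q where "q = xi N ^ 2"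
  define Q where "Q = c q"
  have ch: "chom c" using D unfolding is_Div_W2_def chom_def by blast
  have nz: "x1 \<noteq> 0" "y1 \<noteq> 0" "z1 \<noteq> 0" "x2 \<noteq> 0" "y2 \<noteq> 0" "z2 \<noteq> 0"
    using D unfolding is_Div_W2_def by blast+
  have r1: "x1 * y1 = Q * y1 * x1" and r2: "x2 * y2 = Q * y2 * x2"
    using D unfolding is_Div_W2_def Q_def q_def by blast+
  have zc: "z1 * u = u * z1" "z2 * u = u * z2" if "u \<in> {x1, y1, z1, x2, y2, z2}" for u
    using D that unfolding is_Div_W2_def by blast+
  have cr: "x1 * x2 = x2 * x1" "x1 * y2 = y2 * x1" "y1 * x2 = x2 * y1" "y1 * y2 = y2 * y1"
    using D unfolding is_Div_W2_def by blast+
  have Qc: "Q * d = d * Q" for d unfolding Q_def using chom_comm[OF ch] .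
  have qN: "q^N = 1" and qk: "\<And>k. 0 < k \<Longrightarrow> k < N \<Longrightarrow> q^k \<noteq> 1" and xinz: "xi N \<noteq> 0"
    using xi_facts[OF N1] unfolding q_def by auto
  have qnz: "q \<noteq> 0" using xinz unfolding q_def by simp
  have ciq: "c (inverse q) * Q = 1" unfolding Q_def using qnz
    by (simp add: chom_simps(1,3)[OF ch, symmetric])
  have r1': "y1 * x1 = c (inverse q) * x1 * y1"
  proof -
    have "c (inverse q) * x1 * y1 = c (inverse q) * (Q * y1 * x1)" by (simp add: mult.assoc r1)
    also have "\<dots> = y1 * x1" using ciq by (simp add: mult.assoc[symmetric])
    finally show ?thesis by simp
  qed
  have r2': "y2 * x2 = c (inverse q) * x2 * y2"
  proof -
    have "c (inverse q) * x2 * y2 = c (inverse q) * (Q * y2 * x2)" by (simp add: mult.assoc r2)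
    also have "\<dots> = y2 * x2" using ciq by (simp add: mult.assoc[symmetric])
    finally show ?thesis by simp
  qed
  have iqN: "(inverse q)^N = 1" using qN by (simp add: power_inverse)
  have c1: "c 1 = 1" using chom_simps(1)[OF ch] .
  have pc: "\<And>(a::'a) b n. a * b = b * a \<Longrightarrow> a^n * b = b * a^n" by (rule power_commuting_commutes)
  have cX1: "x1^N * d = d * x1^N" for d
  proof (rule central[OF D])
    show "x1^N * x1 = x1 * x1^N" by (simp add: power_commutes)
    show "x1^N * y1 = y1 * x1^N" using pow_qcomm[OF ch r1[unfolded Q_def], of N] qN c1 unfolding Q_def by simp
    show "x1^N * z1 = z1 * x1^N" using pc[of x1 z1 N] zc[of x1] by simp
    show "x1^N * x2 = x2 * x1^N" using pc[of x1 x2 N] cr by simp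
    show "x1^N * y2 = y2 * x1^N" using pc[of x1 y2 N] cr by simp
    show "x1^N * z2 = z2 * x1^N" using pc[of x1 z2 N] zc[of x1] by simp
  qed
  have cY1: "y1^N * d = d * y1^N" for d
  proof (rule central[OF D])
    show "y1^N * y1 = y1 * y1^N" by (simp add: power_commutes)
    show "y1^N * x1 = x1 * y1^N" using pow_qcomm[OF ch r1', of N] iqN c1 by simp
    show "y1^N * z1 = z1 * y1^N" using pc[of y1 z1 N] zc[of y1] by simp
    show "y1^N * x2 = x2 * y1^N" using pc[of y1 x2 N] cr by simp
    show "y1^N * y2 = y2 * y1^N" using pc[of y1 y2 N] cr by simp
    show "y1^N * z2 = z2 * y1^N" using pc[of y1 z2 N] zc[of y1] by simp
  qed
  have cX2: "x2^N * d = d * x2^N" for d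
  proof (rule central[OF D])
    show "x2^N * x2 = x2 * x2^N" by (simp add: power_commutes)
    show "x2^N * y2 = y2 * x2^N" using pow_qcomm[OF ch r2[unfolded Q_def], of N] qN c1 unfolding Q_def by simp
    show "x2^N * z1 = z1 * x2^N" using pc[of x2 z1 N] zc[of x2] by simp
    show "x2^N * x1 = x1 * x2^N" using pc[of x2 x1 N] cr by simp
    show "x2^N * y1 = y1 * x2^N" using pc[of x2 y1 N] cr by simp
    show "x2^N * z2 = z2 * x2^N" using pc[of x2 z2 N] zc[of x2] by simp
  qed
  have cY2: "y2^N * d = d * y2^N" for d
  proof (rule central[OF D])
    show "y2^N * y2 = y2 * y2^N" by (simp add: power_commutes)
    show "y2^N * x2 = x2 * y2^N" using pow_qcomm[OF ch r2', of N] iqN c1 by simp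
    show "y2^N * z1 = z1 * y2^N" using pc[of y2 z1 N] zc[of y2] by simp
    show "y2^N * x1 = x1 * y2^N" using pc[of y2 x1 N] cr by simp
    show "y2^N * y1 = y1 * y2^N" using pc[of y2 y1 N] cr by simp
    show "y2^N * z2 = z2 * y2^N" using pc[of y2 z2 N] zc[of y2] by simp
  qed
  have z1u: "z1^N * u = u * z1^N" if "u \<in> {x1, y1, z1, x2, y2, z2}" for u
    using pc[of z1 u N] zc(1)[OF that] by simp
  have z2u: "z2^N * u = u * z2^N" if "u \<in> {x1, y1, z1, x2, y2, z2}" for u
    using pc[of z2 u N] zc(2)[OF that] by simp
  have cZ1: "z1^N * d = d * z1^N" for d
    by (rule central[OF D]) (rule z1u; simp)+
  have cZ2: "z2^N * d = d * z2^N" for d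
    by (rule central[OF D]) (rule z2u; simp)+
  have b1: "z2 * z1 = z1 * z2" using zc(2)[of z1] by simp
  have k1: "z2 * z1 = z1 * z2" by (rule b1)
  have b2: "z2 * z1 = z1 * z2" using zc(2)[of z1] by simp
  have k2: "(inverse z2) * z1 = z1 * (inverse z2)" by (rule comm_invs(1)[OF b2])
  have b3: "y1 * z1 = z1 * y1" using zc(1)[of y1] by simp
  have k3: "y1 * z1 = z1 * y1" by (rule b3)
  have b4: "y1 * z1 = z1 * y1" using zc(1)[of y1] by simp
  have k4: "(inverse y1) * z1 = z1 * (inverse y1)" by (rule comm_invs(1)[OF b4])
  have b5: "x1 * z1 = z1 * x1" using zc(1)[of x1] by simp
  have k5: "x1 * z1 = z1 * x1" by (rule b5)
  have b6: "y2 * z1 = z1 * y2" using zc(1)[of y2] by simp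
  have k6: "y2 * z1 = z1 * y2" by (rule b6)
  have b7: "x2 * z1 = z1 * x2" using zc(1)[of x2] by simp
  have k7: "x2 * z1 = z1 * x2" by (rule b7)
  have b8: "y2 * z1 = z1 * y2" using zc(1)[of y2] by simp
  have k8: "(inverse y2) * z1 = z1 * (inverse y2)" by (rule comm_invs(1)[OF b8])
  have b9: "x2 * z1 = z1 * x2" using zc(1)[of x2] by simp
  have k9: "(inverse x2) * z1 = z1 * (inverse x2)" by (rule comm_invs(1)[OF b9])
  have b10: "y1 * z2 = z2 * y1" using zc(2)[of y1] by simp
  have k10: "y1 * z2 = z2 * y1" by (rule b10)
  have b11: "y1 * z2 = z2 * y1" using zc(2)[of y1] by simp
  have k11: "(inverse y1) * z2 = z2 * (inverse y1)" by (rule comm_invs(1)[OF b11])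
  have b12: "x1 * z2 = z2 * x1" using zc(2)[of x1] by simp
  have k12: "x1 * z2 = z2 * x1" by (rule b12)
  have b13: "y2 * z2 = z2 * y2" using zc(2)[of y2] by simp
  have k13: "y2 * z2 = z2 * y2" by (rule b13)
  have b14: "x2 * z2 = z2 * x2" using zc(2)[of x2] by simp
  have k14: "x2 * z2 = z2 * x2" by (rule b14)
  have b15: "y2 * z2 = z2 * y2" using zc(2)[of y2] by simp
  have k15: "(inverse y2) * z2 = z2 * (inverse y2)" by (rule comm_invs(1)[OF b15])
  have b16: "x2 * z2 = z2 * x2" using zc(2)[of x2] by simp
  have k16: "(inverse x2) * z2 = z2 * (inverse x2)" by (rule comm_invs(1)[OF b16])
  have b17: "y1 * z2 = z2 * y1" using zc(2)[of y1] by simp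
  have k17: "y1 * (inverse z2) = (inverse z2) * y1" by (rule comm_invs(2)[OF b17])
  have b18: "y1 * z2 = z2 * y1" using zc(2)[of y1] by simp
  have k18: "(inverse y1) * (inverse z2) = (inverse z2) * (inverse y1)" by (rule comm_invs(3)[OF b18])
  have b19: "x1 * z2 = z2 * x1" using zc(2)[of x1] by simp
  have k19: "x1 * (inverse z2) = (inverse z2) * x1" by (rule comm_invs(2)[OF b19])
  have b20: "y2 * z2 = z2 * y2" using zc(2)[of y2] by simp
  have k20: "y2 * (inverse z2) = (inverse z2) * y2" by (rule comm_invs(2)[OF b20])
  have b21: "x2 * z2 = z2 * x2" using zc(2)[of x2] by simp
  have k21: "x2 * (inverse z2) = (inverse z2) * x2" by (rule comm_invs(2)[OF b21])
  have b22: "y2 * z2 = z2 * y2" using zc(2)[of y2] by simp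
  have k22: "(inverse y2) * (inverse z2) = (inverse z2) * (inverse y2)" by (rule comm_invs(3)[OF b22])
  have b23: "x2 * z2 = z2 * x2" using zc(2)[of x2] by simp
  have k23: "(inverse x2) * (inverse z2) = (inverse z2) * (inverse x2)" by (rule comm_invs(3)[OF b23])
  have b24: "y2 * y1 = y1 * y2" using cr by simp
  have k24: "y2 * y1 = y1 * y2" by (rule b24)
  have b25: "x2 * y1 = y1 * x2" using cr by simp
  have k25: "x2 * y1 = y1 * x2" by (rule b25)
  have b26: "y2 * y1 = y1 * y2" using cr by simp
  have k26: "(inverse y2) * y1 = y1 * (inverse y2)" by (rule comm_invs(1)[OF b26])
  have b27: "x2 * y1 = y1 * x2" using cr by simp
  have k27: "(inverse x2) * y1 = y1 * (inverse x2)" by (rule comm_invs(1)[OF b27])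
  have b28: "y2 * y1 = y1 * y2" using cr by simp
  have k28: "y2 * (inverse y1) = (inverse y1) * y2" by (rule comm_invs(2)[OF b28])
  have b29: "x2 * y1 = y1 * x2" using cr by simp
  have k29: "x2 * (inverse y1) = (inverse y1) * x2" by (rule comm_invs(2)[OF b29])
  have b30: "y2 * y1 = y1 * y2" using cr by simp
  have k30: "(inverse y2) * (inverse y1) = (inverse y1) * (inverse y2)" by (rule comm_invs(3)[OF b30])
  have b31: "x2 * y1 = y1 * x2" using cr by simp
  have k31: "(inverse x2) * (inverse y1) = (inverse y1) * (inverse x2)" by (rule comm_invs(3)[OF b31])
  have b32: "y2 * x1 = x1 * y2" using cr by simp
  have k32: "y2 * x1 = x1 * y2" by (rule b32)
  have b33: "x2 * x1 = x1 * x2" using cr by simp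
  have k33: "x2 * x1 = x1 * x2" by (rule b33)
  have b34: "y2 * x1 = x1 * y2" using cr by simp
  have k34: "(inverse y2) * x1 = x1 * (inverse y2)" by (rule comm_invs(1)[OF b34])
  have b35: "x2 * x1 = x1 * x2" using cr by simp
  have k35: "(inverse x2) * x1 = x1 * (inverse x2)" by (rule comm_invs(1)[OF b35])
  note comms = k1 k2 k3 k4 k5 k6 k7 k8 k9 k10 k11 k12 k13 k14 k15 k16 k17 k18 k19 k20 k21 k22 k23 k24 k25 k26 k27 k28 k29 k30 k31 k32 k33 k34 k35
  note lcomms = lcomm[OF k1] lcomm[OF k2] lcomm[OF k3] lcomm[OF k4] lcomm[OF k5] lcomm[OF k6] lcomm[OF k7] lcomm[OF k8] lcomm[OF k9] lcomm[OF k10] lcomm[OF k11] lcomm[OF k12] lcomm[OF k13] lcomm[OF k14] lcomm[OF k15] lcomm[OF k16] lcomm[OF k17] lcomm[OF k18] lcomm[OF k19] lcomm[OF k20] lcomm[OF k21] lcomm[OF k22] lcomm[OF k23] lcomm[OF k24] lcomm[OF k25] lcomm[OF k26] lcomm[OF k27] lcomm[OF k28] lcomm[OF k29] lcomm[OF k30] lcomm[OF k31] lcomm[OF k32] lcomm[OF k33] lcomm[OF k34] lcomm[OF k35]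
  have Qr: "z1 * Q = Q * z1" "z2 * Q = Q * z2" "(inverse z2) * Q = Q * (inverse z2)" "y1 * Q = Q * y1" "(inverse y1) * Q = Q * (inverse y1)" "x1 * Q = Q * x1" "y2 * Q = Q * y2" "x2 * Q = Q * x2" "(inverse y2) * Q = Q * (inverse y2)" "(inverse x2) * Q = Q * (inverse x2)" using Qc by (metis)+
  note Qrs = Qr lcomm[OF Qr(1)] lcomm[OF Qr(2)] lcomm[OF Qr(3)] lcomm[OF Qr(4)] lcomm[OF Qr(5)] lcomm[OF Qr(6)] lcomm[OF Qr(7)] lcomm[OF Qr(8)] lcomm[OF Qr(9)] lcomm[OF Qr(10)]
  have ciqQ: "Q * c (inverse q) = 1" using ciq Qc by metis
  have nQ: "Q \<noteq> 0" using ciq by auto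
  have rn1: "x1 * y1 = Q * (y1 * x1)" using r1 by (simp add: mult.assoc)
  have rn2: "inverse y2 * x2 = Q * (x2 * inverse y2)"
  proof -
    have "inverse y2 * (x2 * y2) * inverse y2 = inverse y2 * (Q * y2 * x2) * inverse y2" by (simp add: r2)
    then have e: "x2 = Q * (y2 * (x2 * inverse y2))" using nz(5) by (simp add: mult.assoc)
    have "inverse y2 * x2 = inverse y2 * (Q * (y2 * (x2 * inverse y2)))" by (subst e) (rule refl)
    also have "\<dots> = Q * (inverse y2 * y2 * (x2 * inverse y2))" using Qc by (metis mult.assoc)
    also have "\<dots> = Q * (x2 * inverse y2)" using nz by simp
    finally show ?thesis .
  qed
  have rn3: "inverse x2 * inverse y2 = Q * (inverse y2 * inverse x2)"
  proof -
    have "inverse (x2 * y2) = inverse (Q * y2 * x2)" by (simp add: r2)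
    then have "inverse y2 * inverse x2 = inverse x2 * inverse y2 * inverse Q"
      using nz nQ by (simp add: nonzero_inverse_mult_distrib mult.assoc)
    then have "inverse y2 * inverse x2 * Q = inverse x2 * inverse y2" using nQ by (simp add: mult.assoc)
    then show ?thesis using Qc by metis
  qed
  note rns = rn1 lcomm'[OF rn1] rn2 lcomm'[OF rn2] rn3 lcomm'[OF rn3]
  have bijR: "bij R" and R1: "R 1 = 1" and Radd: "\<And>a b. R (a + b) = R a + R b"
    and Rmul: "\<And>a b. R (a * b) = R a * R b" using aut unfolding is_alg_aut_def by blast+
  have injR: "inj R" using bijR bij_is_inj by blast
  have R0: "R 0 = 0"
  proof -
    have "R 0 + R 0 = R 0 + 0" using Radd[of 0 0] by simp
    then show ?thesis by (rule add_left_imp_eq)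
  qed
  have Rnz: "R a \<noteq> 0" if "a \<noteq> 0" for a using that injR R0 by (metis injD)
  have Rpow: "R (a ^ n) = R a ^ n" for a n by (induction n) (simp_all add: R1 Rmul)
  have Rinv: "R (inverse a) = inverse (R a)" for a
  proof (cases "a = 0")
    case True then show ?thesis using R0 by simp
  next
    case False
    have "R a * R (inverse a) = 1" using Rmul[of a "inverse a"] R1 False by simp
    then show ?thesis by (rule inverse_unique[symmetric])
  qed
  have Rneg: "R (- a) = - R a" for a
  proof -
    have "R a + R (- a) = R a + - R a" using Radd[of a "- a"] R0 by simp
    then show ?thesis by (rule add_left_imp_eq)
  qed
  have Rdiff: "R (a - b) = R a - R b" for a b using Radd[of a "- b"] Rneg[of b] by simp
  have RinvR: "inv R (R a) = a" for a using injR by (rule inv_f_f)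
  define \<sigma> where "\<sigma> = (-1::'a)^(N-1)"
  have cm1: "c (-1) = -1" using chom_simps(5)[OF ch, of 1] c1 by simp
  have sg1: "c (xi N ^ (N*(N-1))) = \<sigma>"
    using xi_facts(1)[OF N1] cm1 unfolding \<sigma>_def by (simp add: power_mult chom_simps(7)[OF ch])
  have sg2: "c (inverse (xi N) ^ (N*(N-1))) = \<sigma>"
  proof -
    have "inverse (xi N) ^ (N*(N-1)) = (-1)^(N-1)"
      by (simp only: power_mult power_inverse xi_facts(1)[OF N1]) (simp flip: power_inverse)
    then show ?thesis using cm1 unfolding \<sigma>_def by (simp add: chom_simps(7)[OF ch])
  qed
  have mN: "(-1::'a)^N = - \<sigma>"
  proof -
    have "N = Suc (N-1)" using N1 by simp
    then have "(-1::'a)^N = (-1) * (-1)^(N-1)" by (metis power_Suc)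
    then show ?thesis unfolding \<sigma>_def by simp
  qed
  have xinv1: "x1 * (inverse x1 * t) = t" for t using nz(1) by (simp add: mult.assoc[symmetric])
  have xg: "x1 * g = x1 + y1 * (x1 - z1) * (inverse y2 * (x2 - inverse z2))"
    unfolding g_def by (simp add: algebra_simps xinv1)
  have AB1: "x1 * (y1 * (x1 - z1) * (inverse y2 * (x2 - inverse z2))) = Q * (y1 * (x1 - z1) * (inverse y2 * (x2 - inverse z2))) * x1"
    by (simp add: algebra_simps comms lcomms rns Qrs)
  have P1: "(x1 * g)^N = x1^N + (y1 * (x1 - z1) * (inverse y2 * (x2 - inverse z2)))^N"
    unfolding xg by (rule qbinom_root[OF ch AB1[unfolded Q_def] qN qk N1])
  have PWc: "(y1 * (x1 - z1)) * (inverse y2 * (x2 - inverse z2)) = (inverse y2 * (x2 - inverse z2)) * (y1 * (x1 - z1))"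
    by (simp add: algebra_simps comms lcomms rns Qrs)
  have P2: "(y1 * (x1 - z1) * (inverse y2 * (x2 - inverse z2)))^N = (y1 * (x1 - z1))^N * (inverse y2 * (x2 - inverse z2))^N"
    by (rule pow_prod_comm[OF PWc])
  have Pd: "y1 * (x1 - z1) = y1 * x1 + - (z1 * y1)" by (simp add: algebra_simps comms)
  have AB2: "(y1 * x1) * (- (z1 * y1)) = Q * (- (z1 * y1)) * (y1 * x1)"
    by (simp add: algebra_simps comms lcomms rns Qrs)
  have P3: "(y1 * (x1 - z1))^N = (y1 * x1)^N + (- (z1 * y1))^N"
    unfolding Pd by (rule qbinom_root[OF ch AB2[unfolded Q_def] qN qk N1])
  have sw1: "(y1 * x1)^N = \<sigma> * (y1^N * x1^N)"
    using swap_pow[OF ch r1[unfolded Q_def q_def], of N] sg1 by simp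
  have zy1: "z1 * y1 = y1 * z1" using zc(1)[of y1] by simp
  have P4: "(- (z1 * y1))^N = (-1)^N * (z1^N * y1^N)"
    unfolding power_minus[of "z1 * y1" N] pow_prod_comm[OF zy1] ..
  have Wd: "inverse y2 * (x2 - inverse z2) = - (inverse z2 * inverse y2) + inverse y2 * x2"
    by (simp add: algebra_simps comms)
  have AB3: "(- (inverse z2 * inverse y2)) * (inverse y2 * x2) = Q * (inverse y2 * x2) * (- (inverse z2 * inverse y2))"
    by (simp add: algebra_simps comms lcomms rns Qrs)
  have W1: "(inverse y2 * (x2 - inverse z2))^N = (- (inverse z2 * inverse y2))^N + (inverse y2 * x2)^N"
    unfolding Wd by (rule qbinom_root[OF ch AB3[unfolded Q_def] qN qk N1])
  have rx2: "x2 * inverse y2 = c ((inverse (xi N))^2) * inverse y2 * x2"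
  proof -
    have e: "c ((inverse (xi N))^2) = c (inverse q)" unfolding q_def by (simp add: power_inverse)
    have "c (inverse q) * inverse y2 * x2 = c (inverse q) * (Q * (x2 * inverse y2))" by (simp add: mult.assoc rn2)
    also have "\<dots> = x2 * inverse y2" using ciq by (simp add: mult.assoc[symmetric])
    finally show ?thesis unfolding e by simp
  qed
  have sw2: "(inverse y2 * x2)^N = \<sigma> * (inverse y2 ^ N * x2^N)"
    using swap_pow[OF ch rx2, of N] sg2 by simp
  have zy2: "inverse z2 * inverse y2 = inverse y2 * inverse z2" by (simp add: comms)
  have W2: "(- (inverse z2 * inverse y2))^N = (-1)^N * (inverse z2 ^ N * inverse y2 ^ N)"
    unfolding power_minus[of "inverse z2 * inverse y2" N] pow_prod_comm[OF zy2] ..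
  have RX1a: "R (x1^N) = x1^N + (\<sigma> * (y1^N * x1^N) + (- \<sigma>) * (z1^N * y1^N))
        * ((- \<sigma>) * (inverse (z2^N) * inverse (y2^N)) + \<sigma> * (inverse (y2^N) * x2^N))"
    unfolding Rpow Rx1 P1 P2 P3 W1 sw1 sw2 P4 W2 mN power_inverse ..
  have Ry1d: "inverse y2 + (inverse y1 - inverse z2 * inverse y2) * inverse x2
      = inverse y1 * inverse x2 + (inverse y2 + - (inverse z2 * (inverse y2 * inverse x2)))"
    by (simp add: algebra_simps comms lcomms)
  have AB4: "(inverse y1 * inverse x2) * (inverse y2 + - (inverse z2 * (inverse y2 * inverse x2)))
      = Q * (inverse y2 + - (inverse z2 * (inverse y2 * inverse x2))) * (inverse y1 * inverse x2)"
    by (simp add: algebra_simps comms lcomms rns Qrs)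
  have AB5: "(- (inverse z2 * (inverse y2 * inverse x2))) * inverse y2 = Q * inverse y2 * (- (inverse z2 * (inverse y2 * inverse x2)))"
    by (simp add: algebra_simps comms lcomms rns Qrs)
  have c45: "inverse y1 * inverse x2 = inverse x2 * inverse y1" by (simp add: comms)
  have c46: "inverse z2 * (inverse y2 * inverse x2) = (inverse y2 * inverse x2) * inverse z2"
    by (simp add: comms lcomms mult.assoc)
  have rx3: "inverse x2 * inverse y2 = c ((xi N)^2) * inverse y2 * inverse x2"
    using rn3 unfolding Q_def q_def by (simp add: mult.assoc)
  have Y1a: "R (inverse y1 ^ N) = inverse y1 ^ N * inverse x2 ^ N
      + ((-1)^N * (inverse z2 ^ N * (\<sigma> * (inverse y2 ^ N * inverse x2 ^ N))) + inverse y2 ^ N)"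
  proof -
    have "R (inverse y1 ^ N) = (inverse y1 * inverse x2 + (inverse y2 + - (inverse z2 * (inverse y2 * inverse x2))))^N"
      unfolding Rpow Ry1 Ry1d ..
    also have "\<dots> = (inverse y1 * inverse x2)^N + (inverse y2 + - (inverse z2 * (inverse y2 * inverse x2)))^N"
      by (rule qbinom_root[OF ch AB4[unfolded Q_def] qN qk N1])
    also have "(inverse y2 + - (inverse z2 * (inverse y2 * inverse x2)))^N
        = (- (inverse z2 * (inverse y2 * inverse x2)) + inverse y2)^N" by (simp only: add.commute)
    also have "\<dots> = (- (inverse z2 * (inverse y2 * inverse x2)))^N + inverse y2 ^ N"
      by (rule qbinom_root[OF ch AB5[unfolded Q_def] qN qk N1])
    also have "(- (inverse z2 * (inverse y2 * inverse x2)))^N = (-1)^N * (inverse z2 ^ N * (inverse y2 * inverse x2)^N)"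
      unfolding power_minus[of "inverse z2 * (inverse y2 * inverse x2)" N] pow_prod_comm[OF c46] ..
    also have "(inverse y2 * inverse x2)^N = \<sigma> * (inverse y2 ^ N * inverse x2 ^ N)"
      using swap_pow[OF ch rx3, of N] sg1 by simp
    also have "(inverse y1 * inverse x2)^N = inverse y1 ^ N * inverse x2 ^ N"
      by (rule pow_prod_comm[OF c45])
    finally show ?thesis .
  qed
  have Ry2d: "z1 * inverse z2 * y1 + (y2 - inverse z2 * y1) * x1
      = y2 * x1 + (inverse z2 * (y1 * z1) + - (inverse z2 * (y1 * x1)))"
    by (simp add: algebra_simps comms lcomms)
  have AB6: "(y2 * x1) * (inverse z2 * (y1 * z1) + - (inverse z2 * (y1 * x1)))
      = Q * (inverse z2 * (y1 * z1) + - (inverse z2 * (y1 * x1))) * (y2 * x1)"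
    by (simp add: algebra_simps comms lcomms rns Qrs)
  have AB7: "(- (inverse z2 * (y1 * x1))) * (inverse z2 * (y1 * z1)) = Q * (inverse z2 * (y1 * z1)) * (- (inverse z2 * (y1 * x1)))"
    by (simp add: algebra_simps comms lcomms rns Qrs)
  have c71: "y2 * x1 = x1 * y2" by (simp add: comms)
  have c72: "inverse z2 * (y1 * x1) = (y1 * x1) * inverse z2" by (simp add: comms lcomms mult.assoc)
  have c73: "inverse z2 * (y1 * z1) = (y1 * z1) * inverse z2" by (simp add: comms lcomms mult.assoc)
  have c74: "y1 * z1 = z1 * y1" by (simp add: comms)
  have Y2a: "R (y2 ^ N) = y2 ^ N * x1 ^ N
      + ((-1)^N * (inverse z2 ^ N * (\<sigma> * (y1 ^ N * x1 ^ N))) + inverse z2 ^ N * (y1 ^ N * z1 ^ N))"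
  proof -
    have "R (y2 ^ N) = (y2 * x1 + (inverse z2 * (y1 * z1) + - (inverse z2 * (y1 * x1))))^N"
      unfolding Rpow Ry2 Ry2d ..
    also have "\<dots> = (y2 * x1)^N + (inverse z2 * (y1 * z1) + - (inverse z2 * (y1 * x1)))^N"
      by (rule qbinom_root[OF ch AB6[unfolded Q_def] qN qk N1])
    also have "(inverse z2 * (y1 * z1) + - (inverse z2 * (y1 * x1)))^N
        = (- (inverse z2 * (y1 * x1)) + inverse z2 * (y1 * z1))^N" by (simp only: add.commute)
    also have "\<dots> = (- (inverse z2 * (y1 * x1)))^N + (inverse z2 * (y1 * z1))^N"
      by (rule qbinom_root[OF ch AB7[unfolded Q_def] qN qk N1])
    also have "(- (inverse z2 * (y1 * x1)))^N = (-1)^N * (inverse z2 ^ N * (y1 * x1)^N)"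
      unfolding power_minus[of "inverse z2 * (y1 * x1)" N] pow_prod_comm[OF c72] ..
    also have "(y1 * x1)^N = \<sigma> * (y1 ^ N * x1 ^ N)" by (rule sw1)
    also have "(inverse z2 * (y1 * z1))^N = inverse z2 ^ N * (y1 ^ N * z1 ^ N)"
      unfolding pow_prod_comm[OF c73] pow_prod_comm[OF c74] ..
    also have "(y2 * x1)^N = y2 ^ N * x1 ^ N" by (rule pow_prod_comm[OF c71])
    finally show ?thesis .
  qed
  define eX1 where "eX1 = (abs (x1^N) :: 'a ctr)"
  define eY1 where "eY1 = (abs (y1^N) :: 'a ctr)"
  define eZ1 where "eZ1 = (abs (z1^N) :: 'a ctr)"
  define eX2 where "eX2 = (abs (x2^N) :: 'a ctr)"
  define eY2 where "eY2 = (abs (y2^N) :: 'a ctr)"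
  define eZ2 where "eZ2 = (abs (z2^N) :: 'a ctr)"
  have rX1: "rep eX1 = x1^N" unfolding eX1_def by (rule abs_inverse) (use cX1 in auto)
  have rY1: "rep eY1 = y1^N" unfolding eY1_def by (rule abs_inverse) (use cY1 in auto)
  have rZ1: "rep eZ1 = z1^N" unfolding eZ1_def by (rule abs_inverse) (use cZ1 in auto)
  have rX2: "rep eX2 = x2^N" unfolding eX2_def by (rule abs_inverse) (use cX2 in auto)
  have rY2: "rep eY2 = y2^N" unfolding eY2_def by (rule abs_inverse) (use cY2 in auto)
  have rZ2: "rep eZ2 = z2^N" unfolding eZ2_def by (rule abs_inverse) (use cZ2 in auto)
  define s where "s = (-1::'a ctr)^(N-1)"
  have rs: "rep s = \<sigma>" unfolding s_def \<sigma>_def by (simp add: rep_pow rep_simps)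
  have ss: "s * s = 1"
  proof -
    have "s * s = ((-1) * (-1::'a ctr))^(N-1)" unfolding s_def by (simp only: power_mult_distrib)
    then show ?thesis by simp
  qed
  have repinj: "a = b" if "rep a = rep b" for a b :: "'a ctr" using that by (simp add: rep_inject)
  have enz: "e \<noteq> 0" if "rep e \<noteq> 0" for e :: "'a ctr" using that rep_simps(1) by auto
  have nzX1: "eX1 \<noteq> 0" using nz rX1 by (intro enz) simp
  have nzY1: "eY1 \<noteq> 0" using nz rY1 by (intro enz) simp
  have nzZ1: "eZ1 \<noteq> 0" using nz rZ1 by (intro enz) simp
  have nzX2: "eX2 \<noteq> 0" using nz rX2 by (intro enz) simp
  have nzY2: "eY2 \<noteq> 0" using nz rY2 by (intro enz) simp
  have nzZ2: "eZ2 \<noteq> 0" using nz rZ2 by (intro enz) simp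
  note reps = rX1 rY1 rZ1 rX2 rY2 rZ2 rs rep_simps
  define eG where "eG = 1 + inverse eX1 * eY1 * inverse eY2 * (eX1 - eZ1) * (eX2 - inverse eZ2)"
  have rG: "rep eG = G" unfolding eG_def G_def by (simp only: reps)
  have rGt: "rep (1 + inverse eX2 * eY1 * inverse eY2 * (eX1 - eZ1) * (eX2 - inverse eZ2)) = Gt"
    unfolding Gt_def by (simp only: reps)
  define E1 where "E1 = eX1 + (s * (eY1 * eX1) + (- s) * (eZ1 * eY1)) * ((- s) * (inverse eZ2 * inverse eY2) + s * (inverse eY2 * eX2))"
  have RX1b: "R (x1^N) = rep E1" unfolding RX1a E1_def by (simp only: reps)
  have E1G: "E1 = eX1 * eG"
  proof -
    have "E1 = eX1 + (s * s) * ((eY1 * eX1 - eZ1 * eY1) * (inverse eY2 * eX2 - inverse eZ2 * inverse eY2))"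
      unfolding E1_def by (simp add: algebra_simps)
    also have "\<dots> = eX1 * eG" unfolding ss eG_def using nzX1 nzY2 nzZ2 by (simp add: field_simps)
    finally show ?thesis .
  qed
  have RX1c: "R (x1^N) = rep (eX1 * eG)" using RX1b E1G by simp
  have eGnz: "eG \<noteq> 0" using RX1c Rnz[of "x1^N"] nz(1) rep_simps(1) by auto
  have gnz: "g \<noteq> 0" using Rnz[OF nz(1)] Rx1 by auto
  have Rx12: "R (x1 * x2) = x1 * x2"
  proof -
    have "R (x1 * x2) = x1 * (g * inverse g) * x2" by (simp only: Rmul Rx1 Rx2 mult.assoc)
    then show ?thesis using gnz by simp
  qed
  have "R (x1^N * x2^N) = x1^N * x2^N"
    unfolding pow_prod_comm[OF cr(1), symmetric] Rpow Rx12 ..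
  then have "rep (eX1 * eG) * R (x2^N) = rep (eX1 * eX2)" unfolding Rmul RX1c by (simp only: reps)
  then have "R (x2^N) = inverse (rep (eX1 * eG)) * rep (eX1 * eX2)"
    using nzX1 eGnz rep_simps(1) rep_inject
    by (metis (no_types, lifting) mult.assoc left_inverse mult_1_left mult_zero_left no_zero_divisors)
  also have "\<dots> = rep (eX2 * inverse eG)"
    using nzX1 eGnz by (simp only: rep_simps(6,7)[symmetric]) (simp add: field_simps)
  finally have RX2c: "R (x2^N) = rep (eX2 * inverse eG)" .
  define A3 where "A3 = inverse eY2 + (inverse eY1 - inverse eY2 * inverse eZ2) * inverse eX2"
  have RY1b: "R (inverse y1 ^ N) = rep (inverse eY1 * inverse eX2
      + ((- s) * (inverse eZ2 * (s * (inverse eY2 * inverse eX2))) + inverse eY2))"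
    unfolding Y1a mN by (simp only: reps power_inverse)
  have E3: "inverse eY1 * inverse eX2 + ((- s) * (inverse eZ2 * (s * (inverse eY2 * inverse eX2))) + inverse eY2) = A3"
  proof -
    have "inverse eY1 * inverse eX2 + ((- s) * (inverse eZ2 * (s * (inverse eY2 * inverse eX2))) + inverse eY2)
       = inverse eY1 * inverse eX2 - (s * s) * (inverse eZ2 * inverse eY2 * inverse eX2) + inverse eY2"
      by (simp add: algebra_simps)
    then show ?thesis unfolding ss A3_def by (simp add: algebra_simps)
  qed
  have RY1c: "R (inverse (y1 ^ N)) = rep A3" using RY1b E3 by (simp add: power_inverse)
  have A3nz: "A3 \<noteq> 0" using RY1c Rnz[of "inverse (y1^N)"] nz rep_simps(1) by auto
  define A4 where "A4 = eZ1 * inverse eZ2 * eY1 + (eY2 - eY1 * inverse eZ2) * eX1"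
  have RY2b: "R (y2 ^ N) = rep (eY2 * eX1
      + ((- s) * (inverse eZ2 * (s * (eY1 * eX1))) + inverse eZ2 * (eY1 * eZ1)))"
    unfolding Y2a mN by (simp only: reps power_inverse)
  have E4: "eY2 * eX1 + ((- s) * (inverse eZ2 * (s * (eY1 * eX1))) + inverse eZ2 * (eY1 * eZ1)) = A4"
  proof -
    have "eY2 * eX1 + ((- s) * (inverse eZ2 * (s * (eY1 * eX1))) + inverse eZ2 * (eY1 * eZ1))
       = eY2 * eX1 - (s * s) * (inverse eZ2 * eY1 * eX1) + inverse eZ2 * (eY1 * eZ1)"
      by (simp add: algebra_simps)
    then show ?thesis unfolding ss A4_def by (simp add: algebra_simps)
  qed
  have RY2c: "R (y2 ^ N) = rep A4" using RY2b E4 by simp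
  have A4nz: "A4 \<noteq> 0" using RY2c Rnz[of "y2^N"] nz rep_simps(1) by auto
  have RZ1c: "R (z1 ^ N) = rep eZ1" using Rpow Rz1 rZ1 by simp
  have RZ2c: "R (z2 ^ N) = rep eZ2" using Rpow Rz2 rZ2 by simp
  have RY1p: "R (y1 ^ N) = rep (inverse A3)"
  proof -
    have "y1 ^ N = inverse (inverse (y1 ^ N))" by simp
    then show ?thesis using RY1c Rinv by (metis rep_simps(7))
  qed
  note fid = field_ids[OF nzX1 nzY1 nzZ1 nzX2 nzY2 nzZ2 eG_def eGnz A3_def A3nz A4_def A4nz]
  have RGt: "R Gt = rep eG"
  proof -
    have "R Gt = rep (1 + inverse (eX2 * inverse eG) * inverse A3 * inverse A4 * (eX1 * eG - eZ1) * (eX2 * inverse eG - inverse eZ2))"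
      unfolding Gt_def
      by (simp only: Radd Rmul Rinv Rdiff R1 RX1c RX2c RY1p RY2c RZ1c RZ2c rep_simps)
    then show ?thesis unfolding fid(1) .
  qed
  have C1: "R (x1 ^ N) = x1 ^ N * G" unfolding RX1c rep_simps rX1 rG ..
  have C2: "R (x2 ^ N) = x2 ^ N * inverse G" unfolding RX2c rep_simps rX2 rG ..
  have C3: "R (inverse y1 ^ N) = inverse y2 ^ N
          + (inverse y1 ^ N - inverse y2 ^ N * inverse (z2 ^ N)) * inverse x2 ^ N"
    unfolding power_inverse RY1c A3_def by (simp only: reps)
  have C4: "R (y2 ^ N) = z1 ^ N * inverse (z2 ^ N) * y1 ^ N
          + (y2 ^ N - y1 ^ N * inverse (z2 ^ N)) * x1 ^ N"
    unfolding RY2c A4_def by (simp only: reps)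
  have I1: "R (x1 ^ N * inverse Gt) = x1 ^ N"
  proof -
    have "R (x1 ^ N * inverse Gt) = rep (eX1 * eG * inverse eG)"
      by (simp only: Rmul Rinv RX1c RGt rep_simps)
    also have "eX1 * eG * inverse eG = eX1" using eGnz by (simp add: field_simps)
    also have "rep eX1 = x1 ^ N" by (rule rX1)
    finally show ?thesis .
  qed
  have I2: "R (x2 ^ N * Gt) = x2 ^ N"
  proof -
    have "R (x2 ^ N * Gt) = rep (eX2 * inverse eG * eG)"
      by (simp only: Rmul RX2c RGt rep_simps)
    also have "eX2 * inverse eG * eG = eX2" using eGnz by (simp add: field_simps)
    also have "rep eX2 = x2 ^ N" by (rule rX2)
    finally show ?thesis .
  qed
  have I3: "R (z1 ^ N * inverse (z2 ^ N) * inverse y2 ^ N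
          + (inverse y1 ^ N - z1 ^ N * inverse y2 ^ N) * x2 ^ N) = inverse y1 ^ N"
  proof -
    have "R (z1 ^ N * inverse (z2 ^ N) * inverse y2 ^ N
          + (inverse y1 ^ N - z1 ^ N * inverse y2 ^ N) * x2 ^ N)
        = rep (eZ1 * inverse eZ2 * inverse A4 + (A3 - eZ1 * inverse A4) * (eX2 * inverse eG))"
      unfolding power_inverse
      using RY1c Rinv[of "y1 ^ N"]
      by (simp only: Radd Rmul Rinv Rdiff RX2c RY2c RZ1c RZ2c rep_simps)
    also have "\<dots> = rep (inverse eY1)" unfolding fid(2) ..
    also have "\<dots> = inverse y1 ^ N" by (simp add: rep_simps rY1 power_inverse)
    finally show ?thesis .
  qed
  have I4: "R (y1 ^ N + (y2 ^ N - z1 ^ N * y1 ^ N) * inverse x1 ^ N) = y2 ^ N"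
  proof -
    have "R (y1 ^ N + (y2 ^ N - z1 ^ N * y1 ^ N) * inverse x1 ^ N)
        = rep (inverse A3 + (A4 - eZ1 * inverse A3) * inverse (eX1 * eG))"
      unfolding power_inverse
      by (simp only: Radd Rmul Rinv Rdiff RX1c RY1p RY2c RZ1c rep_simps)
    also have "\<dots> = rep eY2" unfolding fid(3) ..
    also have "\<dots> = y2 ^ N" by (rule rY2)
    finally show ?thesis .
  qed
  show ?thesis
    using Rz1 Rz2 C1 C2 C3 C4
      RinvR[of "x1 ^ N * inverse Gt", unfolded I1]
      RinvR[of "x2 ^ N * Gt", unfolded I2]
      RinvR[of "z1 ^ N * inverse (z2 ^ N) * inverse y2 ^ N + (inverse y1 ^ N - z1 ^ N * inverse y2 ^ N) * x2 ^ N", unfolded I3]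
      RinvR[of "y1 ^ N + (y2 ^ N - z1 ^ N * y1 ^ N) * inverse x1 ^ N", unfolded I4]
    by blast
qed


end
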